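(* Let $\Gamma$ be a strongly regular Neumaier graph with parameters $(n,k,\lambda,\mu;a,c)$. Then $\Gamma$ has exactly three distinct eigenvalues, namely $k$, $c-a-1$, and $-\frac{\mu}{a}$. Moreover, $-\frac{\mu}{a}$ is an integer.
   Context: All graphs are finite, simple, undirected and connected; eigenvalues are those of the adjacency matrix. A graph is edge-regular with parameters $(n,k,\lambda)$ if it has $n$ vertices, is $k$-regular, and any two adjacent vertices have exactly $\lambda$ common neighbours. A clique $C$ is a regular clique with nexus $a$ if every vertex not in $C$ has exactly $a$ neighbours in $C$. A Neumaier graph is a non-complete edge-regular graph containing a regular clique; it has parameters $(n,k,\lambda;a,c)$ if it is edge-regular with parameters $(n,k,\lambda)$ and contains a regular clique of size $c$ with nexus $a$. A strongly regular graph with parameters $(n,k,\lambda,\mu)$ is a non-complete connected $k$-regular graph on $n$ vertices in which adjacent vertices have $\lambda$ common neighbours and non-adjacent vertices have $\mu$ common neighbours. A strongly regular Neumaier graph with parameters $(n,k,\lambda,\mu;a,c)$ is a strongly regular graph with parameters $(n,k,\lambda,\mu)$ which is a Neumaier graph with parameters $(n,k,\lambda;a,c)$. *)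

theory Defs
  imports Complex_Main
begin

definition graph :: "'a set \<Rightarrow> ('a \<Rightarrow> 'a \<Rightarrow> bool) \<Rightarrow> bool" where
  "graph V E \<longleftrightarrow> finite V \<and> V \<noteq> {} \<and>
     (\<forall>x y. E x y \<longrightarrow> x \<in> V \<and> y \<in> V) \<and>
     (\<forall>x y. E x y \<longrightarrow> E y x) \<and> (\<forall>x. \<not> E x x) \<and>
     (\<forall>x\<in>V. \<forall>y\<in>V. E\<^sup>*\<^sup>* x y)"

definition complete_graph :: "'a set \<Rightarrow> ('a \<Rightarrow> 'a \<Rightarrow> bool) \<Rightarrow> bool" where
  "complete_graph V E \<longleftrightarrow> (\<forall>x\<in>V. \<forall>y\<in>V. x \<noteq> y \<longrightarrow> E x y)"

definition regular_graph :: "'a set \<Rightarrow> ('a \<Rightarrow> 'a \<Rightarrow> bool) \<Rightarrow> nat \<Rightarrow> bool" where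
  "regular_graph V E k \<longleftrightarrow> (\<forall>x\<in>V. card {y\<in>V. E x y} = k)"

definition edge_regular :: "'a set \<Rightarrow> ('a \<Rightarrow> 'a \<Rightarrow> bool) \<Rightarrow> nat \<Rightarrow> nat \<Rightarrow> nat \<Rightarrow> bool" where
  "edge_regular V E n k lam \<longleftrightarrow> graph V E \<and> card V = n \<and> regular_graph V E k \<and>
     (\<forall>x y. E x y \<longrightarrow> card {z\<in>V. E x z \<and> E y z} = lam)"

definition clique :: "'a set \<Rightarrow> ('a \<Rightarrow> 'a \<Rightarrow> bool) \<Rightarrow> 'a set \<Rightarrow> bool" where
  "clique V E C \<longleftrightarrow> C \<subseteq> V \<and> C \<noteq> {} \<and> (\<forall>x\<in>C. \<forall>y\<in>C. x \<noteq> y \<longrightarrow> E x y)"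

definition regular_clique :: "'a set \<Rightarrow> ('a \<Rightarrow> 'a \<Rightarrow> bool) \<Rightarrow> 'a set \<Rightarrow> nat \<Rightarrow> bool" where
  "regular_clique V E C a \<longleftrightarrow> clique V E C \<and> (\<forall>x\<in>V - C. card {y\<in>C. E x y} = a)"

definition neumaier :: "'a set \<Rightarrow> ('a \<Rightarrow> 'a \<Rightarrow> bool) \<Rightarrow> nat \<Rightarrow> nat \<Rightarrow> nat \<Rightarrow> nat \<Rightarrow> nat \<Rightarrow> bool" where
  "neumaier V E n k lam a c \<longleftrightarrow> edge_regular V E n k lam \<and> \<not> complete_graph V E \<and>
     (\<exists>C. regular_clique V E C a \<and> card C = c)"

definition strongly_regular :: "'a set \<Rightarrow> ('a \<Rightarrow> 'a \<Rightarrow> bool) \<Rightarrow> nat \<Rightarrow> nat \<Rightarrow> nat \<Rightarrow> nat \<Rightarrow> bool" where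
  "strongly_regular V E n k lam \<mu> \<longleftrightarrow> graph V E \<and> \<not> complete_graph V E \<and> card V = n \<and>
     regular_graph V E k \<and>
     (\<forall>x y. E x y \<longrightarrow> card {z\<in>V. E x z \<and> E y z} = lam) \<and>
     (\<forall>x\<in>V. \<forall>y\<in>V. x \<noteq> y \<and> \<not> E x y \<longrightarrow> card {z\<in>V. E x z \<and> E y z} = \<mu>)"

definition srg_neumaier :: "'a set \<Rightarrow> ('a \<Rightarrow> 'a \<Rightarrow> bool) \<Rightarrow> nat \<Rightarrow> nat \<Rightarrow> nat \<Rightarrow> nat \<Rightarrow> nat \<Rightarrow> nat \<Rightarrow> bool" where
  "srg_neumaier V E n k lam \<mu> a c \<longleftrightarrow> strongly_regular V E n k lam \<mu> \<and> neumaier V E n k lam a c"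

definition adj_eigenvalue :: "'a set \<Rightarrow> ('a \<Rightarrow> 'a \<Rightarrow> bool) \<Rightarrow> real \<Rightarrow> bool" where
  "adj_eigenvalue V E \<theta> \<longleftrightarrow> (\<exists>f :: 'a \<Rightarrow> real. (\<exists>x\<in>V. f x \<noteq> 0) \<and>
     (\<forall>x\<in>V. (\<Sum>y\<in>V. (if E x y then 1 else 0) * f y) = \<theta> * f x))"

end

theory Submission
  imports Defs
begin

locale srgn =
  fixes V :: "'a set" and E :: "'a \<Rightarrow> 'a \<Rightarrow> bool" and n k lam mu a c :: nat and C :: "'a set"
  assumes fin: "finite V" and ne: "V \<noteq> {}" and EV: "\<And>x y. E x y \<Longrightarrow> x\<in>V \<and> y\<in>V"
    and sym: "\<And>x y. E x y \<Longrightarrow> E y x" and irr: "\<And>x. \<not> E x x"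
    and conn: "\<And>x y. x\<in>V \<Longrightarrow> y\<in>V \<Longrightarrow> E\<^sup>*\<^sup>* x y"
    and noncomp: "\<not> complete_graph V E" and cardV: "card V = n"
    and reg: "\<And>x. x\<in>V \<Longrightarrow> card {y\<in>V. E x y} = k"
    and lamd: "\<And>x y. E x y \<Longrightarrow> card {z\<in>V. E x z \<and> E y z} = lam"
    and mud: "\<And>x y. x\<in>V \<Longrightarrow> y\<in>V \<Longrightarrow> x\<noteq>y \<and> \<not>E x y \<Longrightarrow> card {z\<in>V. E x z \<and> E y z} = mu"
    and clqV: "C \<subseteq> V" and clqne: "C \<noteq> {}" and clq: "\<And>x y. x\<in>C \<Longrightarrow> y\<in>C \<Longrightarrow> x\<noteq>y \<Longrightarrow> E x y"
    and nex: "\<And>x. x \<in> V - C \<Longrightarrow> card {y\<in>C. E x y} = a" and cardC: "card C = c"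
begin

definition A :: "('a \<Rightarrow> real) \<Rightarrow> 'a \<Rightarrow> real" where
  "A f x = (\<Sum>y\<in>V. (if E x y then 1 else 0) * f y)"

lemma A_alt: "A f x = (\<Sum>y\<in>V. of_bool (E x y) * f y)"
  unfolding A_def by (simp add: of_bool_def)

lemma A_lin: "A (\<lambda>z. p * f z + q * g z) x = p * A f x + q * A g x"
  unfolding A_def by (simp add: sum.distrib sum_distrib_left algebra_simps)

lemma A_cong: "(\<And>y. y \<in> V \<Longrightarrow> f y = g y) \<Longrightarrow> A f x = A g x"
  unfolding A_def by (rule sum.cong) auto

lemma A_const: "x \<in> V \<Longrightarrow> A (\<lambda>_. p) x = real k * p"
proof -
  assume x: "x \<in> V"
  have "A (\<lambda>_. p) x = (\<Sum>y\<in>V. of_bool (E x y)) * p" unfolding A_alt by (simp add: sum_distrib_right)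
  also have "(\<Sum>y\<in>V. of_bool (E x y) :: real) = real (card (V \<inter> {y. E x y}))" using fin by simp
  also have "V \<inter> {y. E x y} = {y\<in>V. E x y}" by auto
  finally show ?thesis using reg[OF x] by simp
qed

lemma degc: "y \<in> V \<Longrightarrow> (\<Sum>x\<in>V. of_bool (E x y) :: real) = real k"
proof -
  assume y: "y \<in> V"
  have "(\<Sum>x\<in>V. of_bool (E x y) :: real) = real (card (V \<inter> {x. E x y}))" using fin by simp
  also have "V \<inter> {x. E x y} = {x\<in>V. E y x}" using sym by auto
  finally show ?thesis using reg[OF y] by simp
qed

lemma sum_A: "(\<Sum>x\<in>V. A f x) = real k * sum f V"
proof -
  have "(\<Sum>x\<in>V. A f x) = (\<Sum>x\<in>V. \<Sum>y\<in>V. of_bool (E x y) * f y)" unfolding A_alt ..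
  also have "\<dots> = (\<Sum>y\<in>V. \<Sum>x\<in>V. of_bool (E x y) * f y)"
    by (rule sum.swap)
  also have "\<dots> = (\<Sum>y\<in>V. (\<Sum>x\<in>V. of_bool (E x y)) * f y)"
    by (simp add: sum_distrib_right)
  also have "\<dots> = (\<Sum>y\<in>V. real k * f y)"
    by (rule sum.cong) (auto simp: degc)
  finally show ?thesis by (simp add: sum_distrib_left)
qed

lemma cnt2: "x \<in> V \<Longrightarrow> z \<in> V \<Longrightarrow>
  (\<Sum>y\<in>V. of_bool (E x y) * of_bool (E y z) :: real) =
   (if z = x then real k else if E x z then real lam else real mu)"
proof -
  assume x: "x \<in> V" and z: "z \<in> V"
  have "(\<Sum>y\<in>V. of_bool (E x y) * of_bool (E y z) :: real) = (\<Sum>y\<in>V. of_bool (E x y \<and> E z y))"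
    by (rule sum.cong) (auto dest: sym)
  also have "\<dots> = real (card (V \<inter> {y. E x y \<and> E z y}))" using fin by simp
  also have "V \<inter> {y. E x y \<and> E z y} = {y\<in>V. E x y \<and> E z y}" by auto
  finally have eq: "(\<Sum>y\<in>V. of_bool (E x y) * of_bool (E y z) :: real) = real (card {y\<in>V. E x y \<and> E z y})" .
  show ?thesis
  proof (cases "z = x")
    case True
    then have "{y\<in>V. E x y \<and> E z y} = {y\<in>V. E x y}" by auto
    then show ?thesis using eq True reg[OF x] by simp
  next
    case False
    show ?thesis
    proof (cases "E x z")
      case True then show ?thesis using eq False lamd[OF True] by simp
    next
      case nE: False then show ?thesis using eq False mud[OF x z] by simp
    qed
  qed
qed

lemma key: "x \<in> V \<Longrightarrow> A (A f) x = real k * f x + real lam * A f x + real mu * (sum f V - f x - A f x)"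
proof -
  assume x: "x \<in> V"
  have "A (A f) x = (\<Sum>y\<in>V. of_bool (E x y) * (\<Sum>z\<in>V. of_bool (E y z) * f z))" unfolding A_alt ..
  also have "\<dots> = (\<Sum>y\<in>V. \<Sum>z\<in>V. of_bool (E x y) * of_bool (E y z) * f z)"
    by (simp add: sum_distrib_left mult.assoc)
  also have "\<dots> = (\<Sum>z\<in>V. \<Sum>y\<in>V. of_bool (E x y) * of_bool (E y z) * f z)"
    by (rule sum.swap)
  also have "\<dots> = (\<Sum>z\<in>V. (\<Sum>y\<in>V. of_bool (E x y) * of_bool (E y z)) * f z)"
    by (simp add: sum_distrib_right)
  also have "\<dots> = (\<Sum>z\<in>V. (if z = x then real k else if E x z then real lam else real mu) * f z)"
    by (rule sum.cong) (auto simp: cnt2 x)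
  also have "\<dots> = (\<Sum>z\<in>V. (real k - real mu) * (of_bool (z = x) * f z) + (real lam - real mu) * (of_bool (E x z) * f z) + real mu * f z)"
    by (rule sum.cong) (auto simp: irr algebra_simps)
  also have "\<dots> = (real k - real mu) * f x + (real lam - real mu) * A f x + real mu * sum f V"
    using x fin by (simp add: sum.distrib sum_distrib_left[symmetric] A_alt)
  finally show ?thesis by (simp add: algebra_simps)
qed

lemma finC: "finite C" using fin clqV finite_subset by blast

lemma CneV: "V - C \<noteq> {}"
proof
  assume "V - C = {}"
  then have "C = V" using clqV by auto
  then have "complete_graph V E" unfolding complete_graph_def using clq by auto
  then show False using noncomp by simp
qed

lemma a_pos: "a \<ge> 1"
proof (rule ccontr)
  assume "\<not> a \<ge> 1"
  then have a0: "a = 0" by simp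
  obtain x where x: "x \<in> C" using clqne by auto
  obtain y where y: "y \<in> V - C" using CneV by auto
  have "E\<^sup>*\<^sup>* x y" using conn x y clqV by auto
  then have "y \<in> C"
  proof (induction rule: rtranclp_induct)
    case base then show ?case using x .
  next
    case (step z w)
    show ?case
    proof (rule ccontr)
      assume "w \<notin> C"
      then have w: "w \<in> V - C" using EV[OF step(2)] by auto
      have "card {y\<in>C. E w y} = 0" using nex[OF w] a0 by simp
      then have "{y\<in>C. E w y} = {}" using finC by simp
      then show False using step sym by auto
    qed
  qed
  then show False using y by simp
qed

lemma in_cnt: "x \<in> C \<Longrightarrow> card {y\<in>C. E x y} = c - 1"
proof -
  assume x: "x \<in> C"
  have "{y\<in>C. E x y} = C - {x}" using clq x irr by auto
  then show ?thesis using x finC cardC by simp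
qed

lemma a_le: "a \<le> c"
proof -
  obtain y where y: "y \<in> V - C" using CneV by auto
  have "card {z\<in>C. E y z} \<le> card C" using finC by (intro card_mono) auto
  then show ?thesis using nex[OF y] cardC by simp
qed

lemma a_lt: "a < c"
proof (rule ccontr)
  assume "\<not> a < c"
  then have ac: "a = c" using a_le by simp
  obtain x where x: "x \<in> C" using clqne by auto
  have xV: "x \<in> V" using x clqV by auto
  have adj: "E x w" if w: "w \<in> V" "w \<noteq> x" for w
  proof (cases "w \<in> C")
    case True then show ?thesis using clq x w by auto
  next
    case False
    then have "card {y\<in>C. E w y} = card C" using nex w ac cardC by auto
    then have "{y\<in>C. E w y} = C" using finC by (intro card_subset_eq) auto
    then show ?thesis using x sym by auto
  qed
  obtain u v where uv: "u \<in> V" "v \<in> V" "u \<noteq> v" "\<not> E u v"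
    using noncomp unfolding complete_graph_def by auto
  have ux: "u \<noteq> x" using adj uv by auto
  have vx: "v \<noteq> x" using adj uv sym by auto
  have Eux: "E u x" using adj[OF uv(1) ux] sym by auto
  have "{z\<in>V. E u z \<and> E x z} = {z\<in>V. E u z} - {x}" using adj irr by auto
  then have "lam = k - 1" using lamd[OF Eux] reg[OF uv(1)] fin Eux xV by simp
  have "card {z\<in>V. E x z \<and> E u z} = lam" using lamd sym Eux by blast
  moreover have "card ({z\<in>V. E x z} - {u}) = k - 1" using reg[OF xV] fin Eux sym uv(1) by simp
  moreover have "{z\<in>V. E x z \<and> E u z} \<subseteq> {z\<in>V. E x z} - {u}" using irr by auto
  ultimately have "{z\<in>V. E x z \<and> E u z} = {z\<in>V. E x z} - {u}"
    using \<open>lam = k - 1\<close> fin by (intro card_subset_eq) auto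
  moreover have "v \<in> {z\<in>V. E x z} - {u}" using adj[OF uv(2) vx] uv by auto
  ultimately have "E u v" using sym by auto
  then show False using uv by simp
qed

definition chi :: "'a \<Rightarrow> real" where "chi y = of_bool (y \<in> C)"

lemma A_chi: "x \<in> V \<Longrightarrow> A chi x = (if x \<in> C then real c - 1 else real a)"
proof -
  assume x: "x \<in> V"
  have "A chi x = (\<Sum>y\<in>V. of_bool (E x y \<and> y \<in> C))" unfolding A_alt chi_def
    by (rule sum.cong) auto
  also have "\<dots> = real (card (V \<inter> {y. E x y \<and> y \<in> C}))" using fin by simp
  also have "V \<inter> {y. E x y \<and> y \<in> C} = {y\<in>C. E x y}" using clqV by auto
  finally have eq: "A chi x = real (card {y\<in>C. E x y})" .
  have c1: "c \<ge> 1" using a_lt by simp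
  show ?thesis
  proof (cases "x \<in> C")
    case True then show ?thesis using eq in_cnt c1 by simp
  next
    case False then show ?thesis using eq nex x by simp
  qed
qed

lemma sum_chi: "sum chi V = real c"
proof -
  have "sum chi V = real (card (V \<inter> {y. y \<in> C}))" unfolding chi_def using fin by simp
  also have "V \<inter> {y. y \<in> C} = C" using clqV by auto
  finally show ?thesis using cardC by simp
qed

lemma A2_chi: "x \<in> V \<Longrightarrow> A (A chi) x = real a * real k + (real c - real a - 1) * A chi x"
proof -
  assume x: "x \<in> V"
  have "A (A chi) x = A (\<lambda>y. real a * 1 + (real c - real a - 1) * chi y) x"
    by (rule A_cong) (auto simp: A_chi chi_def)
  also have "\<dots> = real a * A (\<lambda>_. 1) x + (real c - real a - 1) * A chi x" by (rule A_lin)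
  finally show ?thesis using A_const[OF x] by simp
qed

lemma Eq_in: "real a * real k + (real c - real a - 1) * (real c - 1) = real k + real lam * (real c - 1)"
proof -
  obtain x where x: "x \<in> C" using clqne by auto
  then have xV: "x \<in> V" using clqV by auto
  show ?thesis using key[OF xV, of chi] A2_chi[OF xV] A_chi[OF xV] x sum_chi
    by (simp add: chi_def algebra_simps)
qed

lemma Eq_out: "real a * real k + (real c - real a - 1) * real a = real lam * real a + real mu * (real c - real a)"
proof -
  obtain x where x: "x \<in> V - C" using CneV by auto
  then have xV: "x \<in> V" by auto
  show ?thesis using key[OF xV, of chi] A2_chi[OF xV] A_chi[OF xV] x sum_chi
    by (simp add: chi_def algebra_simps)
qed

lemma mu_rel: "real mu * (real c - 1) = real a * real k"
proof -
  have h: "real mu * (real c - real a) * (real c - 1) = real a * real k * (real c - real a)"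
    using arg_cong[OF Eq_out, of "\<lambda>t. (real c - 1) * t"] arg_cong[OF Eq_in, of "\<lambda>t. real a * t"]
    by (simp add: algebra_simps)
  have "real c - real a \<noteq> 0" using a_lt by simp
  moreover have "(real mu * (real c - 1) - real a * real k) * (real c - real a) = 0"
    using h by (simp add: algebra_simps)
  ultimately show ?thesis by simp
qed

lemma k_ge: "k \<ge> c - 1"
proof -
  obtain x where x: "x \<in> C" using clqne by auto
  then have xV: "x \<in> V" using clqV by auto
  have "C - {x} \<subseteq> {y\<in>V. E x y}" using clq x clqV by auto
  then have "card (C - {x}) \<le> card {y\<in>V. E x y}" using fin by (intro card_mono) auto
  then show ?thesis using reg[OF xV] x finC cardC by simp
qed

lemma mu_pos: "mu \<ge> 1"
proof -
  have "c \<ge> 2" using a_lt a_pos by simp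
  then have "k \<ge> 1" using k_ge by simp
  then have "real a * real k > 0" using a_pos by simp
  then have "real mu * (real c - 1) > 0" using mu_rel by simp
  then have "real mu > 0" using \<open>c \<ge> 2\<close> by (simp add: zero_less_mult_iff)
  then show ?thesis by simp
qed

lemma A_scale: "A (\<lambda>z. p * f z) x = p * A f x"
  unfolding A_def by (simp add: sum_distrib_left algebra_simps)

lemma ev_sub:
  assumes "adj_eigenvalue V E \<theta>"
  shows "\<theta> = real k \<or> \<theta> * \<theta> = (real lam - real mu) * \<theta> + (real k - real mu)"
proof -
  obtain f x where x: "x \<in> V" "f x \<noteq> 0" and ev: "\<And>y. y \<in> V \<Longrightarrow> A f y = \<theta> * f y"
    using assms unfolding adj_eigenvalue_def A_def by blast
  have "real k * sum f V = (\<Sum>y\<in>V. A f y)" using sum_A by simp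
  also have "\<dots> = (\<Sum>y\<in>V. \<theta> * f y)" by (rule sum.cong) (auto simp: ev)
  finally have S: "real k * sum f V = \<theta> * sum f V" by (simp add: sum_distrib_left)
  show ?thesis
  proof (cases "sum f V = 0")
    case False then show ?thesis using S by simp
  next
    case True
    have "A (A f) x = A (\<lambda>y. \<theta> * f y) x" by (rule A_cong) (simp add: ev)
    also have "\<dots> = \<theta> * (\<theta> * f x)" using A_scale ev[OF x(1)] by simp
    finally have "\<theta> * (\<theta> * f x) = real k * f x + real lam * (\<theta> * f x) + real mu * (0 - f x - \<theta> * f x)"
      using key[OF x(1), of f] True ev[OF x(1)] by simp
    then have "(\<theta> * \<theta> - ((real lam - real mu) * \<theta> + (real k - real mu))) * f x = 0"
      by (simp add: algebra_simps)
    then show ?thesis using x(2) by simp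
  qed
qed

lemma ev_k: "adj_eigenvalue V E (real k)"
proof -
  obtain x where "x \<in> V" using ne by auto
  moreover have "\<forall>y\<in>V. A (\<lambda>_. 1) y = real k * 1" using A_const by simp
  ultimately show ?thesis unfolding adj_eigenvalue_def A_def[symmetric] by (intro exI[of _ "\<lambda>_. 1"]) auto
qed

lemma ev_root:
  assumes hl: "real lam = \<theta> + \<theta>' + real mu" and hk: "real k = real mu - \<theta> * \<theta>'"
  shows "adj_eigenvalue V E \<theta>"
proof -
  obtain x z where xz: "x \<in> V" "z \<in> V" "x \<noteq> z" "\<not> E z x"
    using noncomp sym unfolding complete_graph_def by blast
  define d where "d y = (of_bool (y = x) :: real)" for y
  define u where "u y = A d y - \<theta>' * d y" for y
  define w where "w y = A u y - real k * u y" for y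
  have Ad: "A d y = of_bool (E y x)" if "y \<in> V" for y
  proof -
    have "A d y = (\<Sum>v\<in>V. if v = x then of_bool (E y x) else 0)"
      unfolding A_alt d_def by (rule sum.cong) auto
    then show ?thesis using xz fin by simp
  qed
  have sd: "sum d V = 1" unfolding d_def using xz fin by simp
  have Au: "A u y = \<theta> * u y + real mu" if y: "y \<in> V" for y
  proof -
    have "A u y = A (\<lambda>v. 1 * A d v + (- \<theta>') * d v) y" unfolding u_def by simp
    also have "\<dots> = A (A d) y - \<theta>' * A d y" by (subst A_lin) simp
    finally show ?thesis using key[OF y, of d] sd unfolding u_def hl hk
      by (simp add: algebra_simps)
  qed
  have su: "sum u V = real k - \<theta>'"
    unfolding u_def using sum_A[of d] sd by (simp add: sum_subtractf sum_distrib_left[symmetric])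
  have Aw: "A w y = \<theta> * w y" if y: "y \<in> V" for y
  proof -
    have "A w y = A (\<lambda>v. 1 * A u v + (- real k) * u v) y" unfolding w_def by simp
    also have "\<dots> = A (A u) y - real k * A u y" by (subst A_lin) simp
    finally show ?thesis using key[OF y, of u] su Au[OF y] unfolding w_def hl hk
      by (simp add: algebra_simps)
  qed
  have "w z = real mu" unfolding w_def using Au[OF xz(2)] Ad[OF xz(2)] xz unfolding u_def d_def by simp
  then have "w z \<noteq> 0" using mu_pos by simp
  then show ?thesis unfolding adj_eigenvalue_def A_def[symmetric] using xz Aw by blast
qed

end

theorem proposition3p6:
  fixes V :: "'a set" and E :: "'a \<Rightarrow> 'a \<Rightarrow> bool"
    and n k lam \<mu> a c :: nat
  assumes "srg_neumaier V E n k lam \<mu> a c"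
  shows "{\<theta>. adj_eigenvalue V E \<theta>} = {real k, real c - real a - 1, - real \<mu> / real a}
    \<and> card {\<theta>. adj_eigenvalue V E \<theta>} = 3
    \<and> - real \<mu> / real a \<in> \<int>"
proof -
  obtain C where
    g: "graph V E" and nc: "\<not> complete_graph V E" and cV: "card V = n" and rg: "regular_graph V E k"
    and lm: "\<forall>x y. E x y \<longrightarrow> card {z\<in>V. E x z \<and> E y z} = lam"
    and mm: "\<forall>x\<in>V. \<forall>y\<in>V. x \<noteq> y \<and> \<not> E x y \<longrightarrow> card {z\<in>V. E x z \<and> E y z} = \<mu>"
    and rc: "regular_clique V E C a" and cC: "card C = c"
    using assms unfolding srg_neumaier_def strongly_regular_def neumaier_def by blast
  interpret S: srgn V E n k lam \<mu> a c C
    apply unfold_locales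
    using g nc cV rg lm mm rc cC
    unfolding graph_def regular_graph_def regular_clique_def clique_def
    by auto
  define r where "r = real c - real a - 1"
  define s where "s = - real \<mu> / real a"
  have apos: "real a > 0" using S.a_pos by simp
  have "real a * (r + s) = real a * (real lam - real \<mu>)"
    using S.Eq_out S.mu_rel apos unfolding r_def s_def by (simp add: algebra_simps)
  then have sum_rs: "r + s = real lam - real \<mu>" using apos by simp
  have "real a * (r * s) = real a * (real \<mu> - real k)"
    using S.mu_rel apos unfolding r_def s_def by (simp add: field_simps)
  then have prod_rs: "r * s = real \<mu> - real k" using apos by simp
  have set_eq: "{\<theta>. adj_eigenvalue V E \<theta>} = {real k, r, s}"
  proof (intro equalityI subsetI)
    fix \<theta> assume "\<theta> \<in> {\<theta>. adj_eigenvalue V E \<theta>}"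
    then have "\<theta> = real k \<or> \<theta> * \<theta> = (real lam - real \<mu>) * \<theta> + (real k - real \<mu>)"
      using S.ev_sub by simp
    moreover have "\<theta> * \<theta> = (real lam - real \<mu>) * \<theta> + (real k - real \<mu>) \<Longrightarrow> (\<theta> - r) * (\<theta> - s) = 0"
    proof -
      have hl: "real lam = r + s + real \<mu>" and hk: "real k = real \<mu> - r * s" using sum_rs prod_rs by auto
      show "\<theta> * \<theta> = (real lam - real \<mu>) * \<theta> + (real k - real \<mu>) \<Longrightarrow> (\<theta> - r) * (\<theta> - s) = 0"
        unfolding hl hk by (simp add: algebra_simps)
    qed
    ultimately show "\<theta> \<in> {real k, r, s}" by auto
  next
    fix \<theta> assume "\<theta> \<in> {real k, r, s}"
    moreover have "adj_eigenvalue V E r" using sum_rs prod_rs by (intro S.ev_root[of r s]) auto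
    moreover have "adj_eigenvalue V E s" using sum_rs prod_rs by (intro S.ev_root[of s r]) (auto simp: algebra_simps)
    ultimately show "\<theta> \<in> {\<theta>. adj_eigenvalue V E \<theta>}" using S.ev_k by auto
  qed
  have rk: "r < real k" using S.k_ge S.a_pos S.a_lt unfolding r_def by linarith
  have r0: "r \<ge> 0" using S.a_lt unfolding r_def by simp
  have s0: "s < 0" using S.mu_pos apos unfolding s_def by simp
  have c3: "card {real k, r, s} = 3" using rk r0 s0 by auto
  have "s = real lam - real \<mu> - r" using sum_rs by simp
  then have "s \<in> \<int>" unfolding r_def by simp
  then show ?thesis using set_eq c3 unfolding r_def s_def by simp
qed

end
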